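(* For every integer $r\ge2$, $$\zeta(r)=\frac{1}{(1-2^{1-r})\,r!}\sum_{n=1}^\infty\frac{1}{2^{n+1}}\,Y_r\!\left(0!\,H_n^{(1)},1!\,H_n^{(2)},\dots,(r-1)!\,H_n^{(r)}\right),$$ the series being convergent.
   Context: $\zeta$ is the Riemann zeta function. $H_n^{(m)}=\sum_{k=1}^nk^{-m}$. Complete (exponential) Bell polynomials: $Y_0=1$ and for $r\ge1$, $Y_r(x_1,\dots,x_r)=\sum \frac{r!}{k_1!\cdots k_r!}\prod_{j=1}^r\left(\frac{x_j}{j!}\right)^{k_j}$, the sum over all tuples of nonnegative integers $(k_1,\dots,k_r)$ with $k_1+2k_2+\cdots+rk_r=r$. *)

theory Defs
  imports "HOL-Analysis.Analysis"
begin

definition zeta :: "nat \<Rightarrow> real" where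
  "zeta s = (\<Sum>n. 1 / (real (Suc n)) ^ s)"

definition harm :: "nat \<Rightarrow> nat \<Rightarrow> real" where
  "harm m n = (\<Sum>k=1..n. 1 / (real k) ^ m)"

text \<open>Complete exponential Bell polynomial Y_r(x_1,...,x_r); the argument x is a
  function with x j the j-th variable (j = 1..r). The sum ranges over all tuples
  (k_1,...,k_r) of nonnegative integers with k_1 + 2 k_2 + ... + r k_r = r; each such k_j is
  at most r, so the tuples are drawn from the finite extensional function space on {1..r} with values in {0..r}.\<close>
definition bellY :: "nat \<Rightarrow> (nat \<Rightarrow> real) \<Rightarrow> real" where
  "bellY r x = (\<Sum>k \<in> {k \<in> {1..r} \<rightarrow>\<^sub>E {0..r}. (\<Sum>j=1..r. j * k j) = r}.
      fact r / (\<Prod>j=1..r. fact (k j)) * (\<Prod>j=1..r. (x j / fact j) ^ (k j)))"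

end

theory Submission
  imports Defs "HOL-Computational_Algebra.Formal_Power_Series"
begin
no_notation vec_nth (infixl \<open>$\<close> 90)
unbundle fps_syntax


lemma binom_half_sums: "(\<lambda>m. real (m choose k) / 2 ^ Suc m) sums 1"
proof (induction k)
  case 0
  have "(\<lambda>m. (1/2::real) ^ m) sums (1 / (1 - 1/2))"
    by (rule geometric_sums) simp
  then have "(\<lambda>m. (1/2) * (1/2::real) ^ m) sums ((1/2) * (1 / (1 - 1/2)))"
    by (rule sums_mult)
  then show ?case by (simp add: power_divide)
next
  case (Suc k)
  define a where "a k m = real (m choose k) / 2 ^ Suc m" for k m
  have nn: "0 \<le> a k m" for k m by (simp add: a_def)
  have rec: "a (Suc k) (Suc m) = (a k m + a (Suc k) m) / 2" for m
    by (simp add: a_def field_simps)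
  have S1: "a k sums 1" using Suc unfolding a_def by simp
  have le1: "(\<Sum>m<M. a k m) \<le> 1" for M
    using sum_le_suminf[OF sums_summable[OF S1], of "{..<M}"] nn sums_unique[OF S1] by auto
  have bnd: "(\<Sum>m<M. a (Suc k) m) \<le> 1" for M
  proof -
    have "(\<Sum>m<Suc M. a (Suc k) m) = a (Suc k) 0 + (\<Sum>m<M. a (Suc k) (Suc m))"
      by (rule sum.lessThan_Suc_shift)
    also have "\<dots> = ((\<Sum>m<M. a k m) + (\<Sum>m<M. a (Suc k) m)) / 2"
      by (simp add: rec sum.distrib flip: sum_divide_distrib) (simp add: a_def)
    finally have e: "(\<Sum>m<Suc M. a (Suc k) m) = ((\<Sum>m<M. a k m) + (\<Sum>m<M. a (Suc k) m)) / 2" .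
    have "(\<Sum>m<M. a (Suc k) m) \<le> (\<Sum>m<Suc M. a (Suc k) m)"
      by (simp add: nn)
    moreover have "\<And>x y s::real. y = (s+x)/2 \<Longrightarrow> s \<le> 1 \<Longrightarrow> x \<le> y \<Longrightarrow> x \<le> 1" by (simp add: field_simps)
    ultimately show ?thesis using e le1[of M] by blast
  qed
  have summ: "summable (a (Suc k))"
    by (rule summableI_nonneg_bounded[OF nn bnd])
  define L where "L = suminf (a (Suc k))"
  have SL: "a (Suc k) sums L" using summ L_def summable_sums by blast
  have "(\<lambda>m. a (Suc k) (Suc m)) sums (L - a (Suc k) 0)"
    using SL by (subst sums_Suc_iff) simp
  then have A1: "(\<lambda>m. a (Suc k) (Suc m)) sums L" by (simp add: a_def)
  have "(\<lambda>m. (a k m + a (Suc k) m) / 2) sums ((1 + L) / 2)"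
    by (intro sums_divide sums_add S1 SL)
  then have "(\<lambda>m. a (Suc k) (Suc m)) sums ((1 + L) / 2)" by (simp add: rec)
  with A1 have "L = (1 + L) / 2" using sums_unique2 by blast
  then have "L = 1" by simp
  with SL have "a (Suc k) sums 1" by simp
  then show ?case unfolding a_def .
qed



lemma zeta_sums: "r \<ge> 2 \<Longrightarrow> (\<lambda>k. 1 / real (Suc k) ^ r) sums zeta r"
proof -
  assume r: "r \<ge> 2"
  have "summable (\<lambda>n. inverse (real n ^ r))" by (rule inverse_power_summable[OF r])
  then have "summable (\<lambda>n. inverse (real (Suc n) ^ r))" by (subst summable_Suc_iff)
  then have "summable (\<lambda>k. 1 / real (Suc k) ^ r)" by (simp add: field_simps)
  then show ?thesis unfolding zeta_def by (rule summable_sums)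
qed

lemma eta_sums:
  assumes r: "r \<ge> 2"
  shows "(\<lambda>k. (-1)^k / real (Suc k) ^ r) sums ((1 - 2 powr (1 - real r)) * zeta r)"
proof -
  define z where "z k = 1 / real (Suc k) ^ r" for k
  have Z: "z sums zeta r" unfolding z_def using zeta_sums[OF r] .
  define e where "e k = (if odd k then z k else 0)" for k
  have "(\<lambda>m. e (2*m+1)) = (\<lambda>m. (1/2^r) * z m)"
  proof
    fix m
    have "real (Suc (2*m+1)) = 2 * real (Suc m)" by simp
    then show "e (2*m+1) = (1/2^r) * z m" unfolding e_def z_def by (simp only: power_mult_distrib) simp
  qed
  moreover have "(\<lambda>m. (1/2^r) * z m) sums ((1/2^r) * zeta r)" by (rule sums_mult[OF Z])
  ultimately have "(\<lambda>m. e (2*m+1)) sums ((1/2^r) * zeta r)" by simp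
  moreover have "strict_mono (\<lambda>m::nat. 2*m+1)" by (auto simp: strict_mono_def)
  moreover have "\<And>n. n \<notin> range (\<lambda>m::nat. 2*m+1) \<Longrightarrow> e n = 0"
    by (auto simp: e_def elim!: oddE)
  ultimately have E: "e sums ((1/2^r) * zeta r)" using sums_mono_reindex by blast
  have eq: "(\<lambda>k. (-1)^k / real (Suc k) ^ r) = (\<lambda>k. z k - 2 * e k)"
    by (auto simp: e_def z_def)
  have "(\<lambda>k. z k - 2 * e k) sums (zeta r - 2 * ((1/2^r) * zeta r))"
    by (intro sums_diff Z sums_mult E)
  moreover have "2 powr (1 - real r) = 2 / 2^r"
    by (simp add: powr_diff powr_realpow)
  ultimately show ?thesis unfolding eq by (simp add: algebra_simps)
qed

lemma double_sums:
  assumes r: "r \<ge> 2"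
  shows "(\<lambda>m. \<Sum>k<m. (-1)^k * real (m choose Suc k) / (2^Suc m * real (Suc k)^r))
           sums ((1 - 2 powr (1 - real r)) * zeta r)"
proof -
  define F where "F k m = (-1)^k * real (m choose Suc k) / (2^Suc m * real (Suc k)^r)" for k m
  define G where "G k m = real (m choose Suc k) / (2^Suc m * real (Suc k)^r)" for k m
  have Gh: "((\<lambda>m. G k m) has_sum (1 / real (Suc k)^r)) UNIV" for k
  proof -
    have "(\<lambda>m. (1 / real (Suc k)^r) * (real (m choose Suc k) / 2 ^ Suc m)) sums ((1 / real (Suc k)^r) * 1)"
      by (rule sums_mult[OF binom_half_sums])
    then have "(\<lambda>m. G k m) sums (1 / real (Suc k)^r)" by (simp add: G_def field_simps)
    then show ?thesis by (rule sums_nonneg_imp_has_sum) (simp add: G_def)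
  qed
  have gs: "(\<lambda>k. 1 / real (Suc k)^r) summable_on UNIV"
    by (rule summable_nonneg_imp_summable_on[OF sums_summable[OF zeta_sums[OF r]]]) simp
  have GS: "(\<lambda>(k,m). G k m) summable_on (Sigma UNIV (\<lambda>_. UNIV))"
    by (rule summable_on_SigmaI[where g="\<lambda>k. 1 / real (Suc k)^r"]) (use Gh gs in \<open>auto simp: G_def\<close>)
  have "(\<lambda>x. norm ((\<lambda>(k,m). F k m) x)) summable_on (UNIV \<times> UNIV)"
    using GS by (rule summable_on_cong[THEN iffD1, rotated]) (auto simp: F_def G_def abs_mult)
  then have FS: "(\<lambda>(k,m). F k m) summable_on (UNIV \<times> UNIV)" by (rule abs_summable_summable)
  have swap: "(\<Sum>\<^sub>\<infinity>k. \<Sum>\<^sub>\<infinity>m. F k m) = (\<Sum>\<^sub>\<infinity>m. \<Sum>\<^sub>\<infinity>k. F k m)"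
    by (rule infsum_swap_banach[OF FS])
  have inner1: "(\<Sum>\<^sub>\<infinity>m. F k m) = (-1)^k / real (Suc k)^r" for k
  proof -
    have "((\<lambda>m. (-1)^k * G k m) has_sum ((-1)^k * (1 / real (Suc k)^r))) UNIV"
      by (rule has_sum_cmult_right[OF Gh])
    then show ?thesis by (intro infsumI) (simp add: F_def G_def)
  qed
  have inner2: "(\<Sum>\<^sub>\<infinity>k. F k m) = (\<Sum>k<m. F k m)" for m
  proof -
    have "(\<Sum>\<^sub>\<infinity>k. F k m) = (\<Sum>\<^sub>\<infinity>k\<in>{..<m}. F k m)"
      by (rule infsum_cong_neutral) (auto simp: F_def)
    then show ?thesis by simp
  qed
  have FS2: "(\<lambda>(m,k). F k m) summable_on (Sigma UNIV (\<lambda>_. UNIV))"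
    using FS summable_on_swap[of "\<lambda>(k,m). F k m" UNIV UNIV] by auto
  have S2: "(\<lambda>m. \<Sum>\<^sub>\<infinity>k. F k m) summable_on UNIV"
    using summable_on_Sigma_banach[OF FS2] by simp
  have FS1: "(\<lambda>(k,m). F k m) summable_on (Sigma UNIV (\<lambda>_. UNIV))" using FS by simp
  have S1: "(\<lambda>k. \<Sum>\<^sub>\<infinity>m. F k m) summable_on UNIV"
    using summable_on_Sigma_banach[OF FS1] by simp
  have "(\<lambda>m. \<Sum>\<^sub>\<infinity>k. F k m) sums (\<Sum>\<^sub>\<infinity>m. \<Sum>\<^sub>\<infinity>k. F k m)"
    by (rule has_sum_imp_sums[OF has_sum_infsum[OF S2]])
  then have A: "(\<lambda>m. \<Sum>k<m. F k m) sums (\<Sum>\<^sub>\<infinity>k. \<Sum>\<^sub>\<infinity>m. F k m)"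
    by (simp add: inner2 swap)
  have "(\<lambda>k. \<Sum>\<^sub>\<infinity>m. F k m) sums (\<Sum>\<^sub>\<infinity>k. \<Sum>\<^sub>\<infinity>m. F k m)"
    by (rule has_sum_imp_sums[OF has_sum_infsum[OF S1]])
  then have "(\<lambda>k. (-1)^k / real (Suc k)^r) sums (\<Sum>\<^sub>\<infinity>k. \<Sum>\<^sub>\<infinity>m. F k m)"
    by (simp add: inner1)
  then have "(\<Sum>\<^sub>\<infinity>k. \<Sum>\<^sub>\<infinity>m. F k m) = (1 - 2 powr (1 - real r)) * zeta r"
    using eta_sums[OF r] sums_unique2 by blast
  with A show ?thesis by (simp add: F_def)
qed




definition GG :: "nat \<Rightarrow> real fps" where "GG k = Abs_fps (\<lambda>i. (1 / real k) ^ i)"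
definition HH :: "nat \<Rightarrow> real fps" where "HH n = (\<Prod>k\<in>{1..n}. GG k)"
definition gb :: "nat \<Rightarrow> nat \<Rightarrow> real" where
  "gb N n = (\<Sum>j<n. (-1)^j * real (n choose Suc j) / real (Suc j) ^ N)"

lemma prod_fps_nth_0: "finite A \<Longrightarrow> (prod f A) $ 0 = (\<Prod>j\<in>A. f j $ 0)"
  by (induction A rule: finite_induct) auto

lemma HH_0: "HH n $ 0 = 1"
  by (simp add: HH_def prod_fps_nth_0 GG_def)

lemma HH_Suc_0: "HH 0 $ Suc N = 0"
  by (simp add: HH_def)

lemma GG_eq: "GG k = 1 + fps_const (1 / real k) * (fps_X * GG k)"
proof (rule fps_ext)
  fix n show "GG k $ n = (1 + fps_const (1 / real k) * (fps_X * GG k)) $ n"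
    by (cases n) (simp_all add: GG_def)
qed

lemma HH_rec: "HH (Suc n) $ Suc N = HH n $ Suc N + HH (Suc n) $ N / real (Suc n)"
proof -
  have e1: "HH (Suc n) = HH n * GG (Suc n)"
    unfolding HH_def by (simp add: atLeastAtMostSuc_conv)
  have ring: "\<And>a g c x :: real fps. a * (1 + c * (x * g)) = a + c * (x * (a * g))"
    by algebra
  have "HH (Suc n) = HH n * (1 + fps_const (1 / real (Suc n)) * (fps_X * GG (Suc n)))"
    using e1 GG_eq[of "Suc n"] by metis
  also have "\<dots> = HH n + fps_const (1 / real (Suc n)) * (fps_X * (HH n * GG (Suc n)))"
    by (rule ring)
  finally have e: "HH (Suc n) = HH n + fps_const (1 / real (Suc n)) * (fps_X * HH (Suc n))"
    using e1 by metis
  have "HH (Suc n) $ Suc N = (HH n + fps_const (1 / real (Suc n)) * (fps_X * HH (Suc n))) $ Suc N"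
    using e by metis
  then show ?thesis by simp
qed

lemma gb_0: "gb 0 (Suc n) = 1"
proof -
  have "(\<Sum>i\<le>Suc n. (-1)^i * real (Suc n choose i)) = 0"
    by (rule choose_alternating_sum) simp
  also have "(\<Sum>i\<le>Suc n. (-1)^i * real (Suc n choose i))
     = 1 + (\<Sum>j\<le>n. (-1)^Suc j * real (Suc n choose Suc j))"
    by (subst sum.atMost_Suc_shift) (simp del: binomial_Suc_Suc)
  finally have "(\<Sum>j\<le>n. (-1)^j * real (Suc n choose Suc j)) = 1"
    by (simp add: sum_negf del: binomial_Suc_Suc)
  then show ?thesis by (simp add: gb_def lessThan_Suc_atMost del: binomial_Suc_Suc)
qed

lemma gb_rec: "gb (Suc N) (Suc n) = gb (Suc N) n + gb N (Suc n) / real (Suc n)"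
proof -
  have ext: "gb (Suc N) n = (\<Sum>j<Suc n. (-1)^j * real (n choose Suc j) / real (Suc j) ^ Suc N)"
    by (simp add: gb_def)
  have key: "(-1)^j * real (n choose j) / real (Suc j) ^ Suc N
        = (-1)^j * real (Suc n choose Suc j) / real (Suc j) ^ N / real (Suc n)" for j
  proof -
    have "real (Suc n) * real (n choose j) = real (Suc n choose Suc j) * real (Suc j)"
      using Suc_times_binomial_eq[of n j] by (metis of_nat_mult)
    then have b: "real (Suc n choose Suc j) = real (Suc n) * real (n choose j) / real (Suc j)"
      by (simp add: field_simps del: binomial_Suc_Suc of_nat_Suc)
    show ?thesis by (simp only: b) (simp add: field_simps del: binomial_Suc_Suc of_nat_Suc)
  qed
  have "gb (Suc N) (Suc n) = (\<Sum>j<Suc n. (-1)^j * real (n choose Suc j) / real (Suc j) ^ Suc N)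
      + (\<Sum>j<Suc n. (-1)^j * real (n choose j) / real (Suc j) ^ Suc N)"
    unfolding gb_def by (simp add: sum.distrib[symmetric] add_divide_distrib algebra_simps
        del: sum.lessThan_Suc)
  also have "(\<Sum>j<Suc n. (-1)^j * real (n choose j) / real (Suc j) ^ Suc N)
      = gb N (Suc n) / real (Suc n)"
    unfolding gb_def sum_divide_distrib by (intro sum.cong refl) (rule key)
  finally show ?thesis by (simp add: ext)
qed

lemma HH_gb: "HH n $ Suc N = gb (Suc N) n"
proof (induction n arbitrary: N)
  case 0
  then show ?case by (simp add: HH_Suc_0 gb_def)
next
  case (Suc n)
  note outer = Suc.IH
  show ?case
  proof (induction N)
    case 0
    then show ?case using outer[of 0] by (simp add: HH_rec gb_rec HH_0 gb_0)
  next
    case (Suc N)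
    then show ?case using outer[of "Suc N"] by (simp add: HH_rec gb_rec)
  qed
qed




definition EE :: "(nat \<Rightarrow> nat \<Rightarrow> real) \<Rightarrow> nat \<Rightarrow> real fps" where
  "EE c j = Abs_fps (\<lambda>N. if j dvd N then c j (N div j) else 0)"

definition SS :: "nat \<Rightarrow> nat \<Rightarrow> nat \<Rightarrow> (nat \<Rightarrow> nat) set" where
  "SS m B N = {k \<in> {1..m} \<rightarrow>\<^sub>E {0..B}. (\<Sum>j=1..m. j * k j) = N}"

lemma finite_SS: "finite (SS m B N)"
  unfolding SS_def by (rule finite_subset[OF _ finite_PiE[of "{1..m}" "\<lambda>_. {0..B}"]]) auto

lemma coeff_step:
  "(\<Sum>i=0..N. EE c (Suc m) $ i * g (N - i))
     = (\<Sum>t\<in>{t\<in>{..N}. Suc m * t \<le> N}. c (Suc m) t * g (N - Suc m * t))"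
proof -
  have "(\<Sum>i=0..N. EE c (Suc m) $ i * g (N - i))
      = (\<Sum>i\<in>{i\<in>{0..N}. Suc m dvd i}. c (Suc m) (i div Suc m) * g (N - i))"
    by (subst sum.inter_filter) (auto simp: EE_def intro!: sum.cong)
  also have "\<dots> = (\<Sum>t\<in>{t\<in>{..N}. Suc m * t \<le> N}. c (Suc m) t * g (N - Suc m * t))"
  proof (rule sum.reindex_bij_witness[where i="\<lambda>t. Suc m * t" and j="\<lambda>i. i div Suc m"])
    fix i assume "i \<in> {i\<in>{0..N}. Suc m dvd i}"
    then have "Suc m dvd i" by simp
    then show "Suc m * (i div Suc m) = i" by (rule dvd_mult_div_cancel)
  next
    fix i assume i: "i \<in> {i\<in>{0..N}. Suc m dvd i}"
    then obtain t where t: "i = Suc m * t" "i \<le> N" by (auto elim!: dvdE)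
    then have "t \<le> N" by (metis le_trans mult_Suc le_add1)
    moreover have "i div Suc m = t" using t(1) by (metis nonzero_mult_div_cancel_left Zero_not_Suc)
    ultimately show "i div Suc m \<in> {t\<in>{..N}. Suc m * t \<le> N}"
      using t by simp
  next
    fix t assume "t \<in> {t\<in>{..N}. Suc m * t \<le> N}"
    then show "Suc m * t div Suc m = t" by (metis nonzero_mult_div_cancel_left Zero_not_Suc)
  next
    fix t assume "t \<in> {t\<in>{..N}. Suc m * t \<le> N}"
    then show "Suc m * t \<in> {i\<in>{0..N}. Suc m dvd i}" by (simp del: mult_Suc)
  next
    fix i assume "i \<in> {i\<in>{0..N}. Suc m dvd i}"
    then show "c (Suc m) (i div Suc m) * g (N - Suc m * (i div Suc m)) = c (Suc m) (i div Suc m) * g (N - i)"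
      by (simp add: dvd_mult_div_cancel del: mult_Suc)
  qed
  finally show ?thesis .
qed

lemma coeff_prod:
  "N \<le> B \<Longrightarrow> (\<Prod>j\<in>{1..m}. EE c j) $ N = (\<Sum>k\<in>SS m B N. \<Prod>j=1..m. c j (k j))"
proof (induction m arbitrary: N)
  case 0
  then show ?case by (auto simp: SS_def)
next
  case (Suc m)
  define T where "T = {t\<in>{..N}. Suc m * t \<le> N}"
  have e: "(\<Prod>j\<in>{1..Suc m}. EE c j) = EE c (Suc m) * (\<Prod>j\<in>{1..m}. EE c j)"
    by (simp add: atLeastAtMostSuc_conv)
  have "(\<Prod>j\<in>{1..Suc m}. EE c j) $ N
      = (\<Sum>i=0..N. EE c (Suc m) $ i * (\<Prod>j\<in>{1..m}. EE c j) $ (N - i))"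
    by (simp only: e fps_mult_nth)
  also have "\<dots> = (\<Sum>t\<in>T. c (Suc m) t * (\<Prod>j\<in>{1..m}. EE c j) $ (N - Suc m * t))"
    unfolding T_def by (rule coeff_step)
  also have "\<dots> = (\<Sum>t\<in>T. c (Suc m) t * (\<Sum>k\<in>SS m B (N - Suc m * t). \<Prod>j=1..m. c j (k j)))"
    by (intro sum.cong refl arg_cong2[where f="(*)"] Suc.IH) (use Suc.prems in auto)
  also have "\<dots> = (\<Sum>t\<in>T. \<Sum>k\<in>SS m B (N - Suc m * t). c (Suc m) t * (\<Prod>j=1..m. c j (k j)))"
    by (simp add: sum_distrib_left)
  also have "\<dots> = (\<Sum>(t,k)\<in>Sigma T (\<lambda>t. SS m B (N - Suc m * t)). c (Suc m) t * (\<Prod>j=1..m. c j (k j)))"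
    by (rule sum.Sigma) (auto simp: T_def finite_SS)
  also have "\<dots> = (\<Sum>k\<in>SS (Suc m) B N. \<Prod>j=1..Suc m. c j (k j))"
  proof (rule sum.reindex_bij_witness[where i="\<lambda>k. (k (Suc m), k(Suc m := undefined))"
                                       and j="\<lambda>(t,k). k(Suc m := t)"])
    fix a assume a: "a \<in> Sigma T (\<lambda>t. SS m B (N - Suc m * t))"
    then obtain t k where ak: "a = (t,k)" "k \<in> SS m B (N - Suc m * t)" by auto
    then have "k (Suc m) = undefined" by (auto simp: SS_def PiE_def extensional_def)
    then show "(\<lambda>k. (k (Suc m), k(Suc m := undefined))) ((\<lambda>(t,k). k(Suc m := t)) a) = a"
      using ak by auto
  next
    fix a assume a: "a \<in> Sigma T (\<lambda>t. SS m B (N - Suc m * t))"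
    then obtain t k where ak: "a = (t,k)" "t \<in> T" "k \<in> SS m B (N - Suc m * t)" by auto
    have tB: "t \<le> B" using ak(2) Suc.prems unfolding T_def
      by (metis (no_types, lifting) le_trans mem_Collect_eq mult_Suc mult_le_cancel1 le_add1 nat_mult_1_right one_le_mult_iff zero_less_Suc)
    have sm: "(\<Sum>j=1..m. j * (k(Suc m := t)) j) = (\<Sum>j=1..m. j * k j)"
      by (intro sum.cong) auto
    have "(\<Sum>j=1..Suc m. j * (k(Suc m := t)) j) = (\<Sum>j=1..m. j * k j) + Suc m * t"
      by (simp add: sm)
    also have "\<dots> = N" using ak T_def by (auto simp: SS_def)
    finally show "(\<lambda>(t,k). k(Suc m := t)) a \<in> SS (Suc m) B N"
      using ak tB by (auto simp: SS_def PiE_def extensional_def Pi_def)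
  next
    fix b assume "b \<in> SS (Suc m) B N"
    then show "(\<lambda>(t,k). k(Suc m := t)) ((\<lambda>k. (k (Suc m), k(Suc m := undefined))) b) = b"
      by auto
  next
    fix b assume b: "b \<in> SS (Suc m) B N"
    have sm: "(\<Sum>j=1..m. j * (b(Suc m := undefined)) j) = (\<Sum>j=1..m. j * b j)"
      by (intro sum.cong) auto
    have bs: "(\<Sum>j=1..m. j * b j) + Suc m * b (Suc m) = N"
      using b by (simp add: SS_def)
    then have "Suc m * b (Suc m) \<le> N" by linarith
    then have "b (Suc m) \<in> T" unfolding T_def
      by (metis (no_types, lifting) atMost_iff le_trans mem_Collect_eq mult_Suc le_add1)
    moreover have "b(Suc m := undefined) \<in> SS m B (N - Suc m * b (Suc m))"
      using b bs sm by (auto simp: SS_def PiE_def extensional_def Pi_def)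
    ultimately show "(\<lambda>k. (k (Suc m), k(Suc m := undefined))) b \<in> Sigma T (\<lambda>t. SS m B (N - Suc m * t))"
      by auto
  next
    fix a assume a: "a \<in> Sigma T (\<lambda>t. SS m B (N - Suc m * t))"
    then obtain t k where ak: "a = (t,k)" by auto
    have "(\<Prod>j=1..m. (k(Suc m := t)) j) = 1" if False using that by simp
    have pm: "(\<Prod>j=1..m. c j ((k(Suc m := t)) j)) = (\<Prod>j=1..m. c j (k j))"
      by (intro prod.cong) auto
    show "(\<Prod>j=1..Suc m. c j (((\<lambda>(t,k). k(Suc m := t)) a) j)) = (case a of (t, k) \<Rightarrow> c (Suc m) t * (\<Prod>j=1..m. c j (k j)))"
      using ak pm by simp
  qed
  finally show ?case .
qed






lemma prod_deriv:
  assumes "finite A" "\<And>j. j \<in> A \<Longrightarrow> fps_deriv (f j) = D j * f j"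
  shows "fps_deriv (prod f A) = sum D A * prod f A"
  using assms
proof (induction A rule: finite_induct)
  case empty then show ?case by simp
next
  case (insert a A)
  then show ?case by (simp add: algebra_simps)
qed

lemma deriv_compare:
  fixes A B QA QB :: "real fps"
  assumes "fps_deriv A = QA * A" "fps_deriv B = QB * B" "A $ 0 = B $ 0"
    and "\<And>i. i < r \<Longrightarrow> QA $ i = QB $ i"
  shows "N \<le> r \<Longrightarrow> A $ N = B $ N"
proof (induction N rule: less_induct)
  case (less N)
  show ?case
  proof (cases N)
    case 0 then show ?thesis using assms(3) by simp
  next
    case (Suc M)
    have "real (Suc M) * A $ Suc M = fps_deriv A $ M" by simp
    also have "\<dots> = (\<Sum>i=0..M. QA $ i * A $ (M - i))" by (simp add: assms(1) fps_mult_nth)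
    also have "\<dots> = (\<Sum>i=0..M. QB $ i * B $ (M - i))"
      by (intro sum.cong refl arg_cong2[where f="(*)"] assms(4) less.IH) (use Suc less.prems in auto)
    also have "\<dots> = fps_deriv B $ M" by (simp add: assms(2) fps_mult_nth)
    also have "\<dots> = real (Suc M) * B $ Suc M" by simp
    finally show ?thesis using Suc by simp
  qed
qed

definition EXP :: "real \<Rightarrow> nat \<Rightarrow> real fps" where
  "EXP a j = Abs_fps (\<lambda>N. if j dvd N then a ^ (N div j) / fact (N div j) else 0)"

lemma EXP_deriv:
  assumes j: "j \<ge> 1"
  shows "fps_deriv (EXP a j) = (fps_const (a * real j) * fps_X ^ (j - 1)) * EXP a j"
proof (rule fps_ext)
  fix N
  show "fps_deriv (EXP a j) $ N = ((fps_const (a * real j) * fps_X ^ (j - 1)) * EXP a j) $ N"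
  proof (cases "j dvd Suc N")
    case True
    then obtain t where t: "Suc N = j * t" by (auto elim: dvdE)
    with j obtain s where s: "t = Suc s" by (cases t) auto
    have NN: "N - (j - 1) = j * s" "\<not> N < j - 1" using t s j by (simp_all add: algebra_simps)
    have d1: "Suc N div j = t" using t j by simp
    have d2: "j * s div j = s" using j by simp
    have "fps_deriv (EXP a j) $ N = real (Suc N) * (a ^ t / fact t)"
      using True d1 by (simp add: EXP_def)
    also have "\<dots> = a * real j * (a ^ s / fact s)"
    proof -
      have e1: "real (Suc N) = real j * real (Suc s)" using t s by (metis of_nat_mult)
      have e2: "(fact t :: real) = real (Suc s) * fact s" using s by simp
      show ?thesis unfolding e1 e2 s by (simp add: field_simps del: of_nat_Suc)
    qed
    also have "\<dots> = a * real j * (EXP a j) $ (N - (j - 1))"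
      unfolding EXP_def fps_nth_Abs_fps NN(1) d2 by simp
    also have "\<dots> = a * real j * (fps_X ^ (j - 1) * EXP a j) $ N"
      by (simp only: fps_X_power_mult_nth if_not_P[OF NN(2)])
    also have "\<dots> = ((fps_const (a * real j) * fps_X ^ (j - 1)) * EXP a j) $ N"
      by (simp only: mult.assoc fps_mult_left_const_nth)
    finally show ?thesis .
  next
    case False
    have "((fps_const (a * real j) * fps_X ^ (j - 1)) * EXP a j) $ N = 0"
    proof (cases "N < j - 1")
      case True then show ?thesis by (simp add: mult.assoc fps_X_power_mult_nth)
    next
      case nl: False
      have "Suc N = (N - (j - 1)) + j" using nl j by simp
      then have "\<not> j dvd (N - (j - 1))" using False by (metis dvd_add_left_iff dvd_refl)
      then show ?thesis using nl by (simp add: mult.assoc fps_X_power_mult_nth EXP_def)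
    qed
    moreover have "fps_deriv (EXP a j) $ N = 0" using False by (simp add: EXP_def)
    ultimately show ?thesis by simp
  qed
qed


lemma GG_deriv: "fps_deriv (GG k) = (fps_const (1 / real k) * GG k) * GG k"
proof (rule fps_ext)
  fix N
  have "((fps_const (1 / real k) * GG k) * GG k) $ N = (1 / real k) * (\<Sum>i=0..N. (1/real k)^i * (1/real k)^(N-i))"
    by (simp only: mult.assoc fps_mult_left_const_nth) (simp add: fps_mult_nth GG_def)
  also have "\<dots> = (1 / real k) * (\<Sum>i=0..N. (1/real k)^N)"
    by (intro arg_cong2[where f="(*)"] sum.cong refl) (simp flip: power_add)
  also have "\<dots> = fps_deriv (GG k) $ N"
    by (simp add: GG_def)
  finally show "fps_deriv (GG k) $ N = ((fps_const (1 / real k) * GG k) * GG k) $ N" by simp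
qed

lemma HH_deriv: "fps_deriv (HH n) = (\<Sum>k\<in>{1..n}. fps_const (1 / real k) * GG k) * HH n"
  unfolding HH_def by (rule prod_deriv) (auto simp: GG_deriv)

lemma QB_nth: "(\<Sum>k\<in>{1..n}. fps_const (1 / real k) * GG k) $ i = harm (Suc i) n"
  by (simp add: fps_sum_nth GG_def harm_def power_one_over)

lemma QA_nth:
  "(\<Sum>j\<in>{1..r}. fps_const (p j) * fps_X ^ (j - 1)) $ i = (if i < r then p (Suc i) else (0::real))"
proof -
  have "(\<Sum>j\<in>{1..r}. fps_const (p j) * fps_X ^ (j - 1)) $ i = (\<Sum>j\<in>{1..r}. if j = Suc i then p j else 0)"
    unfolding fps_sum_nth by (intro sum.cong refl) auto
  also have "\<dots> = (if i < r then p (Suc i) else 0)"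
    by (simp add: sum.delta')
  finally show ?thesis .
qed

lemma bell_HH:
  assumes r: "r \<ge> 1"
  shows "bellY r (\<lambda>j. fact (j - 1) * harm j n) = fact r * HH n $ r"
proof -
  define p where "p j = harm j n" for j
  define a where "a j = p j / real j" for j
  define c where "c j i = a j ^ i / fact i" for j i
  define A where "A = (\<Prod>j\<in>{1..r}. EXP (a j) j)"
  have AE: "A = (\<Prod>j\<in>{1..r}. EE c j)"
    unfolding A_def EE_def EXP_def c_def ..
  have xa: "fact (j - 1) * harm j n / fact j = a j" if "j \<in> {1..r}" for j
  proof -
    from that obtain i where i: "j = Suc i" by (cases j) auto
    show ?thesis by (simp add: i a_def p_def field_simps del: of_nat_Suc)
  qed
  have "bellY r (\<lambda>j. fact (j - 1) * harm j n)
      = (\<Sum>k\<in>SS r r r. fact r * (\<Prod>j=1..r. c j (k j)))"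
    unfolding bellY_def SS_def
  proof (intro sum.cong refl)
    fix k
    have "(\<Prod>j=1..r. (fact (j - 1) * harm j n / fact j) ^ k j) = (\<Prod>j=1..r. a j ^ k j)"
    proof (rule prod.cong[OF refl])
      fix j assume "j \<in> {1..r}"
      then show "(fact (j - 1) * harm j n / fact j) ^ k j = a j ^ k j" using xa by metis
    qed
    then show "fact r / (\<Prod>j=1..r. fact (k j)) * (\<Prod>j=1..r. (fact (j - 1) * harm j n / fact j) ^ k j)
        = fact r * (\<Prod>j=1..r. c j (k j))"
      by (simp add: c_def prod_dividef)
  qed
  also have "\<dots> = fact r * A $ r"
    unfolding AE coeff_prod[where N=r and B=r and m=r and c=c, OF order_refl] by (simp add: sum_distrib_left)
  also have "A $ r = HH n $ r"
  proof (rule deriv_compare[where r=r])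
    have "fps_deriv A = (\<Sum>j\<in>{1..r}. fps_const (a j * real j) * fps_X ^ (j - 1)) * A"
      unfolding A_def by (rule prod_deriv) (auto simp: EXP_deriv)
    also have "(\<Sum>j\<in>{1..r}. fps_const (a j * real j) * fps_X ^ (j - 1))
        = (\<Sum>j\<in>{1..r}. fps_const (p j) * fps_X ^ (j - 1))"
      by (intro sum.cong refl) (auto simp: a_def)
    finally show "fps_deriv A = (\<Sum>j\<in>{1..r}. fps_const (p j) * fps_X ^ (j - 1)) * A" .
    show "fps_deriv (HH n) = (\<Sum>k\<in>{1..n}. fps_const (1 / real k) * GG k) * HH n"
      by (rule HH_deriv)
    show "A $ 0 = HH n $ 0"
      by (simp add: A_def HH_0 prod_fps_nth_0 EXP_def)
    fix i assume "i < r"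
    then show "(\<Sum>j\<in>{1..r}. fps_const (p j) * fps_X ^ (j - 1)) $ i
          = (\<Sum>k\<in>{1..n}. fps_const (1 / real k) * GG k) $ i"
      unfolding QA_nth QB_nth by (simp add: p_def)
  qed simp
  finally show ?thesis .
qed



theorem mainTheorem10:
  fixes r :: nat
  assumes "r \<ge> 2"
  shows "summable (\<lambda>n. 1 / 2 ^ (Suc n + 1) *
                     bellY r (\<lambda>j. fact (j - 1) * harm j (Suc n)))
       \<and> zeta r = 1 / ((1 - 2 powr (1 - real r)) * fact r) *
           (\<Sum>n. 1 / 2 ^ (Suc n + 1) * bellY r (\<lambda>j. fact (j - 1) * harm j (Suc n)))"
proof -
  define q where "q = 2 powr (1 - real r)"
  define f where "f m = (\<Sum>k<m. (-1)^k * real (m choose Suc k) / (2^Suc m * real (Suc k)^r))" for m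
  have D: "f sums ((1 - q) * zeta r)" unfolding f_def q_def by (rule double_sums[OF assms])
  obtain r' where r': "r = Suc r'" using assms by (cases r) auto
  have fg: "f m = gb r m / 2 ^ Suc m" for m
    unfolding f_def gb_def sum_divide_distrib by (intro sum.cong refl) (simp add: field_simps)
  have T: "1 / 2 ^ (Suc n + 1) * bellY r (\<lambda>j. fact (j - 1) * harm j (Suc n)) = fact r * f (Suc n)" for n
    using bell_HH[of r "Suc n"] assms HH_gb[of "Suc n" r'] by (simp add: fg r')
  have "(\<lambda>n. f (Suc n)) sums ((1 - q) * zeta r - f 0)" using D by (subst sums_Suc_iff) simp
  then have "(\<lambda>n. f (Suc n)) sums ((1 - q) * zeta r)" by (simp add: f_def)
  then have S: "(\<lambda>n. 1 / 2 ^ (Suc n + 1) * bellY r (\<lambda>j. fact (j - 1) * harm j (Suc n)))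
      sums (fact r * ((1 - q) * zeta r))"
    unfolding T by (rule sums_mult)
  have "q < 1" unfolding q_def by (rule powr_less_one) (use assms in auto)
  then have q1: "1 - q \<noteq> 0" by simp
  have z: "zeta r = 1 / ((1 - q) * fact r) * (fact r * ((1 - q) * zeta r))"
    using q1 by (simp add: field_simps)
  from S have sm: "summable (\<lambda>n. 1 / 2 ^ (Suc n + 1) * bellY r (\<lambda>j. fact (j - 1) * harm j (Suc n)))"
    by (rule sums_summable)
  from S have su: "(\<Sum>n. 1 / 2 ^ (Suc n + 1) * bellY r (\<lambda>j. fact (j - 1) * harm j (Suc n)))
      = fact r * ((1 - q) * zeta r)" by (rule sums_unique[symmetric])
  show ?thesis unfolding q_def[symmetric] su by (intro conjI sm z)
qed


end
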